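(* Let $\mathbf{X}=(\mathbf{X}_0',\mathbf{X}_1',\mathbf{X}_2')'$ have a matrix variate spherical distribution with density generator $h$, $\mathbf{X}_i\in\mathbb{R}^{n_i\times m}$, $n_i\ge m\ge1$, $i=0,1,2$, $N=n_0+n_1+n_2$. Let $V=\|\mathbf{X}_0\|^2$, $V_0=V+\|\mathbf{X}_2\|^2$, $\mathbf{T}=V^{-1/2}\mathbf{X}_1$ and $\mathbf{R}=V_0^{-1/2}\mathbf{X}_2$ (so $\|\mathbf{R}\|^2<1$ and $V=V_0(1-\|\mathbf{R}\|^2)$). Then: (a) the joint density of $(V_0,\mathbf{T},\mathbf{R})$ on $\{v_0>0,\ \mathbf{T}\in\mathbb{R}^{n_1\times m},\ \mathbf{R}\in\mathbb{R}^{n_2\times m},\ \|\mathbf{R}\|^2<1\}$ with respect to $(dv_0)\wedge(d\mathbf{T})\wedge(d\mathbf{R})$ is $$\frac{\pi^{n_0m/2}\,v_0^{Nm/2-1}}{\Gamma[n_0m/2]}\,h\big\{v_0\big[1+(1-\|\mathbf{R}\|^2)\|\mathbf{T}\|^2\big]\big\}\,(1-\|\mathbf{R}\|^2)^{(n_0+n_1)m/2-1};$$ (b) the marginal density of $(\mathbf{T},\mathbf{R})$ with respect to $(d\mathbf{T})\wedge(d\mathbf{R})$ is $$\frac{\Gamma[Nm/2]}{\pi^{(N-n_0)m/2}\Gamma[n_0m/2]}\big[1+(1-\|\mathbf{R}\|^2)\|\mathbf{T}\|^2\big]^{-Nm/2}(1-\|\mathbf{R}\|^2)^{(n_0+n_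1)m/2-1}.$$
   Context: Standing setting: $\mathbf{X}\in\mathbb{R}^{N\times m}$ has a matrix variate spherical distribution with density generator $h$ if it has density $h(\operatorname{tr}\mathbf{X}'\mathbf{X})$ with respect to Lebesgue measure $(d\mathbf{X})$ on $\mathbb{R}^{N\times m}$, where $h:[0,\infty)\to[0,\infty)$ is measurable with $\int_{\mathbb{R}^{N\times m}}h(\operatorname{tr}\mathbf{X}'\mathbf{X})(d\mathbf{X})=1$. $\|\mathbf{A}\|=\sqrt{\operatorname{tr}\mathbf{A}'\mathbf{A}}$ is the Frobenius norm; $(d\mathbf{A})$ is Lebesgue measure on the entries of $\mathbf{A}$. $\Gamma[\cdot]$ is the Gamma function. *)

theory Defs
  imports "HOL-Probability.Probability"
begin

text \<open>Matrices in R^(n x m) are rendered as real^'m^'n; the norm on this type is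
  the Frobenius norm (square root of the sum of squares of all entries).\<close>

end

theory Submission
  imports Defs "HOL-Analysis.Analysis"
begin


lemma measure_eqI_atMost:
  fixes M N :: "real measure"
  assumes sets: "sets M = sets borel" "sets N = sets borel"
  assumes fin: "\<And>x. emeasure M {..x} < \<infinity>"
  assumes eq: "\<And>x. emeasure M {..x} = emeasure N {..x}"
  shows "M = N"
proof (rule measure_eqI_generator_eq_countable[where E="range (atMost :: real \<Rightarrow> real set)" and \<Omega>=UNIV and A="(atMost :: real \<Rightarrow> real set) ` \<rat>"])
  show "Int_stable (range (atMost :: real \<Rightarrow> real set))"
    by (auto simp: Int_stable_def)
  have "sets borel = sigma_sets UNIV (range (atMost :: real \<Rightarrow> real set))"
    by (subst borel_eq_atMost) simp
  then show "sets M = sigma_sets UNIV (range (atMost :: real \<Rightarrow> real set))" "sets N = sigma_sets UNIV (range (atMost :: real \<Rightarrow> real set))"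
    using sets by auto
  show "\<Union> (atMost ` \<rat>) = (UNIV :: real set)"
  proof safe
    fix x :: real
    obtain q where "q \<in> \<rat>" "x < q" using Rats_dense_in_real[of x "x+1"] by auto
    then show "x \<in> \<Union> (atMost ` \<rat>)" by (auto intro!: bexI[of _ q])
  qed auto
  show "countable (atMost ` \<rat>)" using countable_rat by auto
qed (use fin eq in \<open>auto simp: less_top\<close>)

lemma sqrt_pow_powr: "x \<ge> 0 \<Longrightarrow> n > 0 \<Longrightarrow> sqrt x ^ n = x powr (real n / 2)"
proof -
  assume x: "x \<ge> 0" and n: "n > 0"
  show ?thesis
  proof (cases "x = 0")
    case True then show ?thesis using n by (cases n) auto
  next
    case False
    then have "x > 0" using x by simp
    then have "sqrt x ^ n = (x powr (1/2)) ^ n" by (simp add: powr_half_sqrt)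
    also have "\<dots> = x powr (real n / 2)" using \<open>x > 0\<close> by (simp add: powr_realpow[symmetric] powr_powr)
    finally show ?thesis .
  qed
qed

lemma radial_distr:
  defines "d \<equiv> real DIM('a::euclidean_space)"
  shows "distr (lborel :: 'a measure) borel (\<lambda>x. (norm x)\<^sup>2) =
    density lborel (\<lambda>v. ennreal (indicator {0<..} v * (pi powr (d/2) / Gamma (d/2) * v powr (d/2 - 1))))"
    (is "?L = density lborel ?f")
proof (rule measure_eqI_atMost)
  have d1: "d \<ge> 1" unfolding d_def using DIM_positive[where 'a='a] by linarith
  define c where "c = pi powr (d/2) / Gamma (d/2)"
  have cpos: "c > 0" unfolding c_def using d1 by (intro divide_pos_pos Gamma_real_pos) auto
  have L: "emeasure ?L {..x} = (if x < 0 then 0 else ennreal (unit_ball_vol d * x powr (d/2)))" for x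
  proof -
    have "emeasure ?L {..x} = emeasure lborel {y::'a. (norm y)\<^sup>2 \<le> x}"
      by (subst emeasure_distr) (auto intro!: arg_cong2[where f=emeasure])
    also have "\<dots> = (if x < 0 then 0 else ennreal (unit_ball_vol d * x powr (d/2)))"
    proof (cases "x < 0")
      case True
      then have "{y::'a. (norm y)\<^sup>2 \<le> x} = {}"
        by (auto simp: not_le) (smt (verit) zero_le_power2)
      then show ?thesis using True by simp
    next
      case False
      have "(norm y)\<^sup>2 \<le> x" if "norm y \<le> sqrt x" for y :: 'a
        using power_mono[OF that norm_ge_zero, of 2] False by simp
      then have "{y::'a. (norm y)\<^sup>2 \<le> x} = cball 0 (sqrt x)"
        by (auto simp: real_le_rsqrt dist_norm)
      then show ?thesis using False
        by (simp add: emeasure_cball sqrt_pow_powr d_def)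
    qed
    finally show ?thesis .
  qed
  show "sets ?L = sets borel" by simp
  show "sets (density lborel ?f) = sets borel" by simp
  show "emeasure ?L {..x} < \<infinity>" for x using L[of x] by simp
  show "emeasure ?L {..x} = emeasure (density lborel ?f) {..x}" for x
  proof (cases "x < 0")
    case True
    have "emeasure (density lborel ?f) {..x} = \<integral>\<^sup>+ v. ?f v * indicator {..x} v \<partial>lborel"
      by (subst emeasure_density) auto
    also have "\<dots> = \<integral>\<^sup>+ (v::real). 0 \<partial>lborel"
      using True by (intro nn_integral_cong) (auto split: split_indicator)
    finally show ?thesis using True L[of x] by simp
  next
    case False
    have "emeasure (density lborel ?f) {..x} = \<integral>\<^sup>+ v. ?f v * indicator {..x} v \<partial>lborel"
      by (subst emeasure_density) auto
    also have "\<dots> = \<integral>\<^sup>+ v. ennreal (c * v powr (d/2 - 1)) * indicator {0..x} v \<partial>lborel"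
      by (intro nn_integral_cong) (auto split: split_indicator simp: c_def)
    also have "\<dots> = ennreal (c * (x powr (d/2 - 1 + 1) / (d/2 - 1 + 1)))"
      using False d1 cpos
      by (intro nn_integral_has_integral_lebesgue' has_integral_mult_right has_integral_powr_from_0) auto
    also have "c * (x powr (d/2 - 1 + 1) / (d/2 - 1 + 1)) = unit_ball_vol d * x powr (d/2)"
    proof -
      have "d/2 \<notin> \<int>\<^sub>\<le>\<^sub>0" using d1 by (auto dest: nonpos_Ints_nonpos)
      then have "Gamma (d/2 + 1) = (d/2) * Gamma (d/2)" by (rule Gamma_plus1)
      then have ub: "unit_ball_vol d = pi powr (d/2) / ((d/2) * Gamma (d/2))"
        unfolding unit_ball_vol_def by (subst (asm) eq_commute) simp
      have "Gamma (d/2) > 0" using d1 by (intro Gamma_real_pos) auto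
      then show ?thesis using d1 unfolding c_def ub by (simp add: field_simps)
    qed
    finally show ?thesis using False L[of x] by simp
  qed
qed

lemma nn_integral_radial:
  fixes F :: "real \<Rightarrow> ennreal"
  assumes [measurable]: "F \<in> borel_measurable borel"
  shows "(\<integral>\<^sup>+x. F ((norm x)\<^sup>2) \<partial>(lborel :: 'a::euclidean_space measure)) =
    (\<integral>\<^sup>+v. ennreal (indicator {0<..} v * (pi powr (real DIM('a)/2) / Gamma (real DIM('a)/2) * v powr (real DIM('a)/2 - 1))) * F v \<partial>lborel)"
proof -
  have "(\<integral>\<^sup>+x. F ((norm x)\<^sup>2) \<partial>(lborel :: 'a measure)) = (\<integral>\<^sup>+v. F v \<partial>distr (lborel :: 'a measure) borel (\<lambda>x. (norm x)\<^sup>2))"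
    by (subst nn_integral_distr) auto
  also have "\<dots> = (\<integral>\<^sup>+v. F v \<partial>density lborel (\<lambda>v. ennreal (indicator {0<..} v * (pi powr (real DIM('a)/2) / Gamma (real DIM('a)/2) * v powr (real DIM('a)/2 - 1)))))"
    by (subst radial_distr) simp
  also have "\<dots> = (\<integral>\<^sup>+v. ennreal (indicator {0<..} v * (pi powr (real DIM('a)/2) / Gamma (real DIM('a)/2) * v powr (real DIM('a)/2 - 1))) * F v \<partial>lborel)"
    by (subst nn_integral_density) auto
  finally show ?thesis .
qed

lemma nn_integral_scale:
  fixes F :: "'a::euclidean_space \<Rightarrow> ennreal" and c :: real
  assumes [measurable]: "F \<in> borel_measurable borel" and c: "c > 0"
  shows "(\<integral>\<^sup>+y. F y \<partial>lborel) = ennreal (c ^ DIM('a)) * (\<integral>\<^sup>+x. F (c *\<^sub>R x) \<partial>lborel)"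
proof -
  have "(\<integral>\<^sup>+y. F y \<partial>lborel) = (\<integral>\<^sup>+y. F y \<partial>density (distr lborel borel (\<lambda>x. 0 + c *\<^sub>R x)) (\<lambda>_. \<bar>c\<bar>^DIM('a)))"
    using lborel_affine[of c "0::'a"] c by simp
  also have "\<dots> = (\<integral>\<^sup>+x. ennreal (c ^ DIM('a)) * F (c *\<^sub>R x) \<partial>lborel)"
    using c by (subst nn_integral_density) (auto simp: nn_integral_distr)
  also have "\<dots> = ennreal (c ^ DIM('a)) * (\<integral>\<^sup>+x. F (c *\<^sub>R x) \<partial>lborel)"
    by (rule nn_integral_cmult) simp
  finally show ?thesis .
qed

lemma nn_integral_shift:
  fixes F :: "real \<Rightarrow> ennreal"
  assumes [measurable]: "F \<in> borel_measurable borel"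
  shows "(\<integral>\<^sup>+v. F v \<partial>lborel) = (\<integral>\<^sup>+u. F (u - s) \<partial>lborel)"
  using nn_integral_real_affine[of F 1 "- s"] by simp

lemma nn_integral_swap:
  fixes f :: "'a::euclidean_space \<Rightarrow> 'b::euclidean_space \<Rightarrow> ennreal"
  assumes "(\<lambda>p. f (fst p) (snd p)) \<in> borel_measurable borel"
  shows "(\<integral>\<^sup>+x. \<integral>\<^sup>+y. f x y \<partial>lborel \<partial>lborel) = (\<integral>\<^sup>+y. \<integral>\<^sup>+x. f x y \<partial>lborel \<partial>lborel)"
proof -
  have "case_prod f \<in> borel_measurable (lborel \<Otimes>\<^sub>M lborel)"
    using assms by (simp add: lborel_prod case_prod_beta')
  then show ?thesis
    using pair_sigma_finite.Fubini'[of lborel lborel f]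
    by (simp add: pair_sigma_finite_def lborel.sigma_finite_measure_axioms)
qed

lemma nn_integral_pair_iter:
  fixes f :: "'a::euclidean_space \<times> 'b::euclidean_space \<Rightarrow> ennreal"
  assumes "f \<in> borel_measurable borel"
  shows "(\<integral>\<^sup>+p. f p \<partial>lborel) = (\<integral>\<^sup>+x. \<integral>\<^sup>+y. f (x, y) \<partial>lborel \<partial>lborel)"
proof -
  have "f \<in> borel_measurable (lborel \<Otimes>\<^sub>M lborel)"
    using assms by (simp add: lborel_prod)
  then have "(\<integral>\<^sup>+x. \<integral>\<^sup>+y. f (x, y) \<partial>lborel \<partial>lborel) = integral\<^sup>N (lborel \<Otimes>\<^sub>M lborel) f"
    by (rule lborel.nn_integral_fst)
  then show ?thesis by (simp add: lborel_prod)
qed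

lemma meas_nn:
  fixes f :: "'a::euclidean_space \<Rightarrow> 'b::euclidean_space \<Rightarrow> ennreal"
  assumes "(\<lambda>p. f (fst p) (snd p)) \<in> borel_measurable borel"
  shows "(\<lambda>x. \<integral>\<^sup>+y. f x y \<partial>lborel) \<in> borel_measurable borel"
proof -
  have "sets ((borel :: 'a measure) \<Otimes>\<^sub>M (lborel :: 'b measure)) = sets ((borel :: 'a measure) \<Otimes>\<^sub>M (borel :: 'b measure))"
    by (rule sets_pair_measure_cong) auto
  also have "\<dots> = sets (borel :: ('a \<times> 'b) measure)" by (subst borel_prod[symmetric]) (rule refl)
  finally have "case_prod f \<in> borel_measurable (borel \<Otimes>\<^sub>M lborel)"
    using assms by (simp add: case_prod_beta' cong: measurable_cong_sets)
  then show ?thesis by (rule lborel.borel_measurable_nn_integral)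
qed



lemma meas3:
  fixes f :: "'a::euclidean_space \<times> 'b::euclidean_space \<times> 'c::euclidean_space \<Rightarrow> ennreal"
  assumes "f \<in> borel_measurable (borel \<Otimes>\<^sub>M (borel \<Otimes>\<^sub>M borel))"
  shows "f \<in> borel_measurable borel"
  using assms by (simp only: borel_prod)

lemma meas2:
  fixes f :: "'a::euclidean_space \<times> 'b::euclidean_space \<Rightarrow> ennreal"
  assumes "f \<in> borel_measurable (borel \<Otimes>\<^sub>M borel)"
  shows "f \<in> borel_measurable borel"
  using assms by (simp only: borel_prod)

lemma meas_fix:
  fixes f :: "'a::euclidean_space \<times> 'b::euclidean_space \<Rightarrow> ennreal"
  assumes "f \<in> borel_measurable borel"
  shows "(\<lambda>y. f (x, y)) \<in> borel_measurable borel"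
proof -
  have "(\<lambda>y::'b. (x,y)) \<in> borel_measurable borel"
    by (intro borel_measurable_continuous_onI continuous_intros)
  then show ?thesis by (rule measurable_compose[OF _ assms])
qed

lemma meas_comp:
  fixes f :: "'a::euclidean_space \<Rightarrow> ennreal" and \<phi> :: "'b::euclidean_space \<Rightarrow> 'a"
  assumes "f \<in> borel_measurable borel" "continuous_on UNIV \<phi>"
  shows "(\<lambda>y. f (\<phi> y)) \<in> borel_measurable borel"
  using measurable_compose[OF borel_measurable_continuous_onI[OF assms(2)] assms(1)] .

lemma ennreal_mult3:
  "a \<ge> 0 \<Longrightarrow> b \<ge> 0 \<Longrightarrow> c \<ge> 0 \<Longrightarrow> ennreal a * (ennreal b * (ennreal c * G)) = ennreal (a*b*c) * G"
  by (simp add: ennreal_mult mult.assoc)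

lemma em2: "a \<ge> 0 \<Longrightarrow> ennreal a * (G * ennreal b) = G * ennreal (a*b)"
  by (simp add: ennreal_mult' mult_ac)

lemma core:
  fixes h :: "real \<Rightarrow> real" and g :: "real \<times> 'b::euclidean_space \<times> 'c::euclidean_space \<Rightarrow> ennreal"
  assumes hm[measurable]: "h \<in> borel_measurable borel" and gm[measurable]: "g \<in> borel_measurable borel"
    and hnn: "\<And>t. t \<ge> 0 \<Longrightarrow> h t \<ge> 0"
  defines "d0 \<equiv> real DIM('a::euclidean_space)" and "d1 \<equiv> real DIM('b)" and "d2 \<equiv> real DIM('c)"
  shows "(\<integral>\<^sup>+x. ennreal (h ((norm (fst x))\<^sup>2 + (norm (fst (snd x)))\<^sup>2 + (norm (snd (snd x)))\<^sup>2)) *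
            g ((norm (fst x))\<^sup>2 + (norm (snd (snd x)))\<^sup>2,
               inverse (sqrt ((norm (fst x))\<^sup>2)) *\<^sub>R fst (snd x),
               inverse (sqrt ((norm (fst x))\<^sup>2 + (norm (snd (snd x)))\<^sup>2)) *\<^sub>R snd (snd x)) \<partial>(lborel :: ('a \<times> 'b \<times> 'c) measure))
       = (\<integral>\<^sup>+y. ennreal (indicator {(v0', t', r'). v0' > 0 \<and> (norm r')\<^sup>2 < 1} y *
              (pi powr (d0 / 2) * fst y powr ((d0 + d1 + d2) / 2 - 1) / Gamma (d0 / 2)) *
              h (fst y * (1 + (1 - (norm (snd (snd y)))\<^sup>2) * (norm (fst (snd y)))\<^sup>2)) *
              (1 - (norm (snd (snd y)))\<^sup>2) powr ((d0 + d1) / 2 - 1)) * g y \<partial>lborel)"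
proof -
  define C0 where "C0 = pi powr (d0/2) / Gamma (d0/2)"
  define K where "K = (\<lambda>v (x1::'b) (x2::'c). ennreal (indicator {0<..} v * (C0 * v powr (d0/2 - 1))) *
     (ennreal (h (v + (norm x1)\<^sup>2 + (norm x2)\<^sup>2)) *
      g (v + (norm x2)\<^sup>2, inverse (sqrt v) *\<^sub>R x1, inverse (sqrt (v + (norm x2)\<^sup>2)) *\<^sub>R x2)))"
  define K1 where "K1 = (\<lambda>v (t::'b) (x2::'c). ennreal (indicator {0<..} v * (C0 * v powr (d0/2 - 1)) * v powr (d1/2) *
      h (v * (1 + (norm t)\<^sup>2) + (norm x2)\<^sup>2)) * g (v + (norm x2)\<^sup>2, t, inverse (sqrt (v + (norm x2)\<^sup>2)) *\<^sub>R x2))"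
  define K3 where "K3 = (\<lambda>u (t::'b) (r::'c). ennreal (indicator {(v0', t', r'). v0' > 0 \<and> (norm r')\<^sup>2 < 1} (u,t,r) *
              (pi powr (d0 / 2) * u powr ((d0 + d1 + d2) / 2 - 1) / Gamma (d0 / 2)) *
              h (u * (1 + (1 - (norm r)\<^sup>2) * (norm t)\<^sup>2)) *
              (1 - (norm r)\<^sup>2) powr ((d0 + d1) / 2 - 1)) * g (u,t,r))"
  have Km[measurable]: "(\<lambda>p. K (fst p) (fst (snd p)) (snd (snd p))) \<in> borel_measurable borel"
    unfolding K_def by (rule meas3) measurable
  have K1m[measurable]: "(\<lambda>p. K1 (fst p) (fst (snd p)) (snd (snd p))) \<in> borel_measurable borel"
    unfolding K1_def by (rule meas3) measurable
  have K3m[measurable]: "(\<lambda>p. K3 (fst p) (fst (snd p)) (snd (snd p))) \<in> borel_measurable borel"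
    unfolding K3_def by (rule meas3) measurable
  define \<Phi> where "\<Phi> = (\<lambda>(x0::'a) (p::'b\<times>'c). ennreal (h ((norm x0)\<^sup>2 + (norm (fst p))\<^sup>2 + (norm (snd p))\<^sup>2)) *
            g ((norm x0)\<^sup>2 + (norm (snd p))\<^sup>2,
               inverse (sqrt ((norm x0)\<^sup>2)) *\<^sub>R fst p,
               inverse (sqrt ((norm x0)\<^sup>2 + (norm (snd p))\<^sup>2)) *\<^sub>R snd p))"
  have \<Phi>m: "(\<lambda>q. \<Phi> (fst q) (snd q)) \<in> borel_measurable borel"
    unfolding \<Phi>_def by (rule meas3) measurable
  have step1: "?thesis \<longleftrightarrow> (\<integral>\<^sup>+x0. \<integral>\<^sup>+p. \<Phi> x0 p \<partial>lborel \<partial>lborel) = (\<integral>\<^sup>+u. \<integral>\<^sup>+t. \<integral>\<^sup>+r. K3 u t r \<partial>lborel \<partial>lborel \<partial>lborel)"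
  proof -
    have "(\<integral>\<^sup>+x. \<Phi> (fst x) (snd x) \<partial>(lborel :: ('a \<times> 'b \<times> 'c) measure)) = (\<integral>\<^sup>+x0. \<integral>\<^sup>+p. \<Phi> x0 p \<partial>lborel \<partial>lborel)"
      using nn_integral_pair_iter[OF \<Phi>m] by simp
    moreover have "(\<integral>\<^sup>+y. K3 (fst y) (fst (snd y)) (snd (snd y)) \<partial>(lborel :: (real \<times> 'b \<times> 'c) measure)) = (\<integral>\<^sup>+u. \<integral>\<^sup>+t. \<integral>\<^sup>+r. K3 u t r \<partial>lborel \<partial>lborel \<partial>lborel)"
    proof -
      have "(\<integral>\<^sup>+y. K3 (fst y) (fst (snd y)) (snd (snd y)) \<partial>(lborel :: (real \<times> 'b \<times> 'c) measure)) = (\<integral>\<^sup>+u. \<integral>\<^sup>+q. K3 u (fst q) (snd q) \<partial>lborel \<partial>lborel)"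
        using nn_integral_pair_iter[OF K3m] by simp
      also have "\<dots> = (\<integral>\<^sup>+u. \<integral>\<^sup>+t. \<integral>\<^sup>+r. K3 u t r \<partial>lborel \<partial>lborel \<partial>lborel)"
      proof (rule nn_integral_cong)
        fix u
        have "(\<lambda>q. K3 u (fst q) (snd q)) \<in> borel_measurable borel"
          using meas_fix[OF K3m, of u] by simp
        from nn_integral_pair_iter[OF this] show "(\<integral>\<^sup>+q. K3 u (fst q) (snd q) \<partial>lborel) = (\<integral>\<^sup>+t. \<integral>\<^sup>+r. K3 u t r \<partial>lborel \<partial>lborel)"
          by simp
      qed
      finally show ?thesis .
    qed
    moreover have "(\<lambda>x. \<Phi> (fst x) (snd x)) = (\<lambda>x. ennreal (h ((norm (fst x))\<^sup>2 + (norm (fst (snd x)))\<^sup>2 + (norm (snd (snd x)))\<^sup>2)) *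
            g ((norm (fst x))\<^sup>2 + (norm (snd (snd x)))\<^sup>2,
               inverse (sqrt ((norm (fst x))\<^sup>2)) *\<^sub>R fst (snd x),
               inverse (sqrt ((norm (fst x))\<^sup>2 + (norm (snd (snd x)))\<^sup>2)) *\<^sub>R snd (snd x)))"
      by (simp add: \<Phi>_def)
    moreover have "(\<lambda>y. K3 (fst y) (fst (snd y)) (snd (snd y))) = (\<lambda>y. ennreal (indicator {(v0', t', r'). v0' > 0 \<and> (norm r')\<^sup>2 < 1} y *
              (pi powr (d0 / 2) * fst y powr ((d0 + d1 + d2) / 2 - 1) / Gamma (d0 / 2)) *
              h (fst y * (1 + (1 - (norm (snd (snd y)))\<^sup>2) * (norm (fst (snd y)))\<^sup>2)) *
              (1 - (norm (snd (snd y)))\<^sup>2) powr ((d0 + d1) / 2 - 1)) * g y)"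
      by (simp add: K3_def)
    ultimately show ?thesis by simp
  qed
  have d0pos: "d0 > 0" "d1 > 0" "d2 > 0" unfolding d0_def d1_def d2_def by auto
  have C0pos: "C0 > 0" unfolding C0_def using d0pos by (intro divide_pos_pos Gamma_real_pos) auto
  have P3: "(\<integral>\<^sup>+x0. \<Phi> x0 p \<partial>lborel) = (\<integral>\<^sup>+v. K v (fst p) (snd p) \<partial>lborel)" for p
  proof -
    define \<Psi> where "\<Psi> = (\<lambda>v. ennreal (h (v + (norm (fst p))\<^sup>2 + (norm (snd p))\<^sup>2)) *
      g (v + (norm (snd p))\<^sup>2, inverse (sqrt v) *\<^sub>R fst p, inverse (sqrt (v + (norm (snd p))\<^sup>2)) *\<^sub>R snd p))"
    have [measurable]: "\<Psi> \<in> borel_measurable borel" unfolding \<Psi>_def by measurable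
    have "(\<integral>\<^sup>+x0. \<Phi> x0 p \<partial>lborel) = (\<integral>\<^sup>+x0. \<Psi> ((norm (x0::'a))\<^sup>2) \<partial>lborel)"
      by (simp add: \<Phi>_def \<Psi>_def)
    also have "\<dots> = (\<integral>\<^sup>+v. K v (fst p) (snd p) \<partial>lborel)"
      by (subst nn_integral_radial) (auto simp: K_def \<Psi>_def C0_def d0_def)
    finally show ?thesis .
  qed
  have P7: "(\<integral>\<^sup>+x1. K v x1 x2 \<partial>lborel) = (\<integral>\<^sup>+t. K1 v t x2 \<partial>lborel)" for v x2
  proof (cases "v > 0")
    case False
    then show ?thesis by (simp add: K_def K1_def)
  next
    case True
    have m1: "(\<lambda>x1. K v x1 x2) \<in> borel_measurable borel"
      using meas_comp[OF Km, of "\<lambda>x1. (v, x1, x2)"] by (simp add: continuous_intros)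
    have m2: "(\<lambda>t. K v (sqrt v *\<^sub>R t) x2) \<in> borel_measurable borel"
      using meas_comp[OF Km, of "\<lambda>t. (v, sqrt v *\<^sub>R t, x2)"] by (simp add: continuous_intros)
    have "(\<integral>\<^sup>+x1. K v x1 x2 \<partial>lborel) = ennreal (sqrt v ^ DIM('b)) * (\<integral>\<^sup>+t. K v (sqrt v *\<^sub>R t) x2 \<partial>lborel)"
      using True by (intro nn_integral_scale m1) auto
    also have "\<dots> = (\<integral>\<^sup>+t. ennreal (sqrt v ^ DIM('b)) * K v (sqrt v *\<^sub>R t) x2 \<partial>lborel)"
      using nn_integral_cmult[of "\<lambda>t. K v (sqrt v *\<^sub>R t) x2" lborel "ennreal (sqrt v ^ DIM('b))"] m2 by simp
    also have "\<dots> = (\<integral>\<^sup>+t. K1 v t x2 \<partial>lborel)"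
    proof (rule nn_integral_cong)
      fix t :: 'b
      have n: "(norm (sqrt v *\<^sub>R t))\<^sup>2 = v * (norm t)\<^sup>2" using True by (simp add: power_mult_distrib)
      have i: "inverse (sqrt v) *\<^sub>R (sqrt v *\<^sub>R t) = t" using True by simp
      have a: "v + v * (norm t)\<^sup>2 + (norm x2)\<^sup>2 = v * (1 + (norm t)\<^sup>2) + (norm x2)\<^sup>2" by (simp add: algebra_simps)
      have hge: "h (v * (1 + (norm t)\<^sup>2) + (norm x2)\<^sup>2) \<ge> 0" using True by (intro hnn) simp
      have s: "sqrt v ^ DIM('b) = v powr (d1/2)" using True by (simp add: sqrt_pow_powr d1_def)
      show "ennreal (sqrt v ^ DIM('b)) * K v (sqrt v *\<^sub>R t) x2 = K1 v t x2"
        unfolding K_def K1_def n i a s using True hge C0pos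
        by (simp add: ennreal_mult3 mult_ac)
    qed
    finally show ?thesis .
  qed
  have P9: "(\<integral>\<^sup>+v. K1 v t x2 \<partial>lborel) = (\<integral>\<^sup>+u. K1 (u - (norm x2)\<^sup>2) t x2 \<partial>lborel)" for t x2
  proof -
    have "(\<lambda>v. K1 v t x2) \<in> borel_measurable borel"
      using meas_comp[OF K1m, of "\<lambda>v. (v, t, x2)"] by (simp add: continuous_intros)
    then show ?thesis by (rule nn_integral_shift)
  qed
  have P12: "(\<integral>\<^sup>+x2. K1 (u - (norm x2)\<^sup>2) t x2 \<partial>lborel) = (\<integral>\<^sup>+r. K3 u t r \<partial>lborel)" for u t
  proof (cases "u > 0")
    case False
    have "K1 (u - (norm x2)\<^sup>2) t x2 = 0" for x2 :: 'c
    proof -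
      have "\<not> u - (norm x2)\<^sup>2 > 0" using False by (smt (verit) zero_le_power2)
      then show ?thesis by (simp add: K1_def)
    qed
    moreover have "K3 u t r = 0" for r using False by (simp add: K3_def)
    ultimately show ?thesis by simp
  next
    case True
    have m1: "(\<lambda>x2. K1 (u - (norm x2)\<^sup>2) t x2) \<in> borel_measurable borel"
      using meas_comp[OF K1m, of "\<lambda>x2. (u - (norm x2)\<^sup>2, t, x2)"] by (simp add: continuous_intros)
    have m2: "(\<lambda>r. K1 (u - (norm (sqrt u *\<^sub>R r))\<^sup>2) t (sqrt u *\<^sub>R r)) \<in> borel_measurable borel"
      using meas_comp[OF K1m, of "\<lambda>r. (u - (norm (sqrt u *\<^sub>R r))\<^sup>2, t, sqrt u *\<^sub>R r)"] by (simp add: continuous_intros)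
    have "(\<integral>\<^sup>+x2. K1 (u - (norm x2)\<^sup>2) t x2 \<partial>lborel) = ennreal (sqrt u ^ DIM('c)) * (\<integral>\<^sup>+r. K1 (u - (norm (sqrt u *\<^sub>R r))\<^sup>2) t (sqrt u *\<^sub>R r) \<partial>lborel)"
      using True by (intro nn_integral_scale[of "\<lambda>x2. K1 (u - (norm x2)\<^sup>2) t x2"] m1) auto
    also have "\<dots> = (\<integral>\<^sup>+r. ennreal (sqrt u ^ DIM('c)) * K1 (u - (norm (sqrt u *\<^sub>R r))\<^sup>2) t (sqrt u *\<^sub>R r) \<partial>lborel)"
      using nn_integral_cmult[of "\<lambda>r. K1 (u - (norm (sqrt u *\<^sub>R r))\<^sup>2) t (sqrt u *\<^sub>R r)" lborel "ennreal (sqrt u ^ DIM('c))"] m2 by simp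
    also have "\<dots> = (\<integral>\<^sup>+r. K3 u t r \<partial>lborel)"
    proof (rule nn_integral_cong)
      fix r :: 'c
      have n: "(norm (sqrt u *\<^sub>R r))\<^sup>2 = u * (norm r)\<^sup>2" using True by (simp add: power_mult_distrib)
      have i: "inverse (sqrt (u - u * (norm r)\<^sup>2 + u * (norm r)\<^sup>2)) *\<^sub>R (sqrt u *\<^sub>R r) = r" using True by simp
      have e: "u - u * (norm r)\<^sup>2 + u * (norm r)\<^sup>2 = u" by simp
      show "ennreal (sqrt u ^ DIM('c)) * K1 (u - (norm (sqrt u *\<^sub>R r))\<^sup>2) t (sqrt u *\<^sub>R r) = K3 u t r"
      proof (cases "(norm r)\<^sup>2 < 1")
        case False
        then have "\<not> u - u * (norm r)\<^sup>2 > 0" using True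
          by (smt (verit) mult_le_cancel_left1)
        then show ?thesis using False unfolding K1_def K3_def n by simp
      next
        case rlt: True
        define w where "w = 1 - (norm r)\<^sup>2"
        have wpos: "w > 0" using rlt unfolding w_def by simp
        have uw: "u - u * (norm r)\<^sup>2 = u * w" unfolding w_def by (simp add: algebra_simps)
        have harg: "u * w * (1 + (norm t)\<^sup>2) + u * (norm r)\<^sup>2 = u * (1 + w * (norm t)\<^sup>2)"
          unfolding w_def by (simp add: algebra_simps)
        have hge: "h (u * (1 + w * (norm t)\<^sup>2)) \<ge> 0" using True wpos by (intro hnn) simp
        have s: "sqrt u ^ DIM('c) = u powr (d2/2)" using True by (simp add: sqrt_pow_powr d2_def)
        have pw: "u powr (d2/2) * (C0 * (u * w) powr (d0/2 - 1) * (u * w) powr (d1/2)) =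
           pi powr (d0 / 2) * u powr ((d0 + d1 + d2) / 2 - 1) / Gamma (d0 / 2) * w powr ((d0 + d1) / 2 - 1)"
        proof -
          have "(u * w) powr (d0/2 - 1) * (u * w) powr (d1/2) = (u * w) powr ((d0 + d1)/2 - 1)"
            by (simp add: powr_add[symmetric] add_divide_distrib algebra_simps)
          also have "\<dots> = u powr ((d0 + d1)/2 - 1) * w powr ((d0 + d1)/2 - 1)"
            using True wpos by (simp add: powr_mult)
          finally have "u powr (d2/2) * (C0 * (u * w) powr (d0/2 - 1) * (u * w) powr (d1/2)) =
              C0 * (u powr (d2/2) * u powr ((d0 + d1)/2 - 1)) * w powr ((d0 + d1)/2 - 1)"
            by (simp add: mult_ac)
          also have "u powr (d2/2) * u powr ((d0 + d1)/2 - 1) = u powr ((d0 + d1 + d2) / 2 - 1)"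
            by (simp add: powr_add[symmetric] add_divide_distrib algebra_simps)
          finally show ?thesis unfolding C0_def by simp
        qed
        have "ennreal (sqrt u ^ DIM('c)) * K1 (u * w) t (sqrt u *\<^sub>R r) =
          ennreal (u powr (d2/2) * (C0 * (u * w) powr (d0/2 - 1) * (u * w) powr (d1/2) * h (u * (1 + w * (norm t)\<^sup>2)))) * g (u, t, r)"
        proof -
          have ge: "u * w + u * (norm r)\<^sup>2 = u" unfolding w_def by (simp add: algebra_simps)
          show ?thesis
            unfolding K1_def s n harg ge using True wpos C0pos hge
            by (simp add: em2 mult_ac ennreal_mult'[symmetric])
        qed
        also have "\<dots> = K3 u t r"
        proof -
          have ind: "indicator {(v0', t', r'). v0' > 0 \<and> (norm r')\<^sup>2 < 1} (u,t,r) = (1::real)"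
            using True rlt by simp
          have "u powr (d2/2) * (C0 * (u * w) powr (d0/2 - 1) * (u * w) powr (d1/2) * h (u * (1 + w * (norm t)\<^sup>2))) =
             1 * (pi powr (d0 / 2) * u powr ((d0 + d1 + d2) / 2 - 1) / Gamma (d0 / 2)) * h (u * (1 + w * (norm t)\<^sup>2)) * w powr ((d0 + d1) / 2 - 1)"
            using arg_cong[OF pw, of "\<lambda>z. z * h (u * (1 + w * (norm t)\<^sup>2))"] by (simp add: ac_simps)
          then show ?thesis unfolding K3_def ind w_def by (simp only: mult.commute)
        qed
        finally show ?thesis unfolding n uw .
      qed
    qed
    finally show ?thesis .
  qed
  have mK1s: "(\<lambda>q. K1 (snd q - (norm (fst q))\<^sup>2) t (fst q)) \<in> borel_measurable borel" for t
    using meas_comp[OF K1m, of "\<lambda>q. (snd q - (norm (fst q))\<^sup>2, t, fst q)"] by (simp add: continuous_intros)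
  have "(\<integral>\<^sup>+x0. \<integral>\<^sup>+p. \<Phi> x0 p \<partial>lborel \<partial>lborel) = (\<integral>\<^sup>+p. \<integral>\<^sup>+x0. \<Phi> x0 p \<partial>lborel \<partial>lborel)"
    using \<Phi>m by (rule nn_integral_swap)
  also have "\<dots> = (\<integral>\<^sup>+p. \<integral>\<^sup>+v. K v (fst p) (snd p) \<partial>lborel \<partial>lborel)"
    by (simp add: P3)
  also have "\<dots> = (\<integral>\<^sup>+x1. \<integral>\<^sup>+x2. \<integral>\<^sup>+v. K v x1 x2 \<partial>lborel \<partial>lborel \<partial>lborel)"
  proof -
    have "(\<lambda>q. K (snd q) (fst (fst q)) (snd (fst q))) \<in> borel_measurable borel"
      using meas_comp[OF Km, of "\<lambda>q. (snd q, fst (fst q), snd (fst q))"] by (simp add: continuous_intros)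
    then have "(\<lambda>p. \<integral>\<^sup>+v. K v (fst p) (snd p) \<partial>lborel) \<in> borel_measurable borel"
      by (intro meas_nn) simp
    from nn_integral_pair_iter[OF this] show ?thesis by simp
  qed
  also have "\<dots> = (\<integral>\<^sup>+x2. \<integral>\<^sup>+x1. \<integral>\<^sup>+v. K v x1 x2 \<partial>lborel \<partial>lborel \<partial>lborel)"
  proof (rule nn_integral_swap)
    have "(\<lambda>q. K (snd q) (fst (fst q)) (snd (fst q))) \<in> borel_measurable borel"
      using meas_comp[OF Km, of "\<lambda>q. (snd q, fst (fst q), snd (fst q))"] by (simp add: continuous_intros)
    then have "(\<lambda>p. \<integral>\<^sup>+v. K v (fst p) (snd p) \<partial>lborel) \<in> borel_measurable borel"
      by (intro meas_nn) simp
    then show "(\<lambda>p. \<integral>\<^sup>+v. K v (fst p) (snd p) \<partial>lborel) \<in> borel_measurable borel" .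
  qed
  also have "\<dots> = (\<integral>\<^sup>+x2. \<integral>\<^sup>+v. \<integral>\<^sup>+x1. K v x1 x2 \<partial>lborel \<partial>lborel \<partial>lborel)"
  proof (rule nn_integral_cong)
    fix x2
    show "(\<integral>\<^sup>+x1. \<integral>\<^sup>+v. K v x1 x2 \<partial>lborel \<partial>lborel) = (\<integral>\<^sup>+v. \<integral>\<^sup>+x1. K v x1 x2 \<partial>lborel \<partial>lborel)"
      using meas_comp[OF Km, of "\<lambda>q. (snd q, fst q, x2)"] by (intro nn_integral_swap) (simp add: continuous_intros)
  qed
  also have "\<dots> = (\<integral>\<^sup>+x2. \<integral>\<^sup>+v. \<integral>\<^sup>+t. K1 v t x2 \<partial>lborel \<partial>lborel \<partial>lborel)"
    by (simp add: P7)
  also have "\<dots> = (\<integral>\<^sup>+x2. \<integral>\<^sup>+t. \<integral>\<^sup>+v. K1 v t x2 \<partial>lborel \<partial>lborel \<partial>lborel)"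
  proof (rule nn_integral_cong)
    fix x2
    show "(\<integral>\<^sup>+v. \<integral>\<^sup>+t. K1 v t x2 \<partial>lborel \<partial>lborel) = (\<integral>\<^sup>+t. \<integral>\<^sup>+v. K1 v t x2 \<partial>lborel \<partial>lborel)"
      using meas_comp[OF K1m, of "\<lambda>q. (fst q, snd q, x2)"] by (intro nn_integral_swap) (simp add: continuous_intros)
  qed
  also have "\<dots> = (\<integral>\<^sup>+x2. \<integral>\<^sup>+t. \<integral>\<^sup>+u. K1 (u - (norm x2)\<^sup>2) t x2 \<partial>lborel \<partial>lborel \<partial>lborel)"
    by (simp add: P9)
  also have "\<dots> = (\<integral>\<^sup>+t. \<integral>\<^sup>+x2. \<integral>\<^sup>+u. K1 (u - (norm x2)\<^sup>2) t x2 \<partial>lborel \<partial>lborel \<partial>lborel)"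
  proof (rule nn_integral_swap)
    have "(\<lambda>q. K1 (snd q - (norm (fst (fst q)))\<^sup>2) (snd (fst q)) (fst (fst q))) \<in> borel_measurable borel"
      using meas_comp[OF K1m, of "\<lambda>q. (snd q - (norm (fst (fst q)))\<^sup>2, snd (fst q), fst (fst q))"] by (simp add: continuous_intros)
    then show "(\<lambda>p. \<integral>\<^sup>+u. K1 (u - (norm (fst p))\<^sup>2) (snd p) (fst p) \<partial>lborel) \<in> borel_measurable borel"
      by (intro meas_nn) simp
  qed
  also have "\<dots> = (\<integral>\<^sup>+t. \<integral>\<^sup>+u. \<integral>\<^sup>+x2. K1 (u - (norm x2)\<^sup>2) t x2 \<partial>lborel \<partial>lborel \<partial>lborel)"
  proof (rule nn_integral_cong)
    fix t
    show "(\<integral>\<^sup>+x2. \<integral>\<^sup>+u. K1 (u - (norm x2)\<^sup>2) t x2 \<partial>lborel \<partial>lborel) = (\<integral>\<^sup>+u. \<integral>\<^sup>+x2. K1 (u - (norm x2)\<^sup>2) t x2 \<partial>lborel \<partial>lborel)"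
      using mK1s[of t] by (intro nn_integral_swap) simp
  qed
  also have "\<dots> = (\<integral>\<^sup>+t. \<integral>\<^sup>+u. \<integral>\<^sup>+r. K3 u t r \<partial>lborel \<partial>lborel \<partial>lborel)"
    by (simp add: P12)
  also have "\<dots> = (\<integral>\<^sup>+u. \<integral>\<^sup>+t. \<integral>\<^sup>+r. K3 u t r \<partial>lborel \<partial>lborel \<partial>lborel)"
  proof (rule nn_integral_swap)
    have "(\<lambda>q. K3 (snd (fst q)) (fst (fst q)) (snd q)) \<in> borel_measurable borel"
      using meas_comp[OF K3m, of "\<lambda>q. (snd (fst q), fst (fst q), snd q)"] by (simp add: continuous_intros)
    then show "(\<lambda>p. \<integral>\<^sup>+r. K3 (snd p) (fst p) r \<partial>lborel) \<in> borel_measurable borel"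
      by (intro meas_nn) simp
  qed
  finally show ?thesis using step1 by simp
qed

lemma Jlem:
  fixes h :: "real \<Rightarrow> real"
  assumes hm[measurable]: "h \<in> borel_measurable borel"
    and hnn: "\<And>t. t \<ge> 0 \<Longrightarrow> h t \<ge> 0"
    and norm1: "(\<integral>\<^sup>+x. ennreal (h ((norm (fst x))\<^sup>2 + (norm (fst (snd x)))\<^sup>2 + (norm (snd (snd x)))\<^sup>2)) \<partial>(lborel :: ('a::euclidean_space \<times> 'b::euclidean_space \<times> 'c::euclidean_space) measure)) = 1"
  defines "D \<equiv> real DIM('a) + real DIM('b) + real DIM('c)"
  shows "(\<integral>\<^sup>+u. ennreal (indicator {0<..} u * u powr (D/2 - 1) * h u) \<partial>lborel) = ennreal (Gamma (D/2) / pi powr (D/2))"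
proof -
  define c where "c = pi powr (D/2) / Gamma (D/2)"
  have Dpos: "D > 0" unfolding D_def by (simp add: add_pos_pos)
  have cpos: "c > 0" unfolding c_def using Dpos by (intro divide_pos_pos Gamma_real_pos) auto
  define J where "J = (\<integral>\<^sup>+u. ennreal (indicator {0<..} u * u powr (D/2 - 1) * h u) \<partial>lborel)"
  have eqf: "(\<lambda>x::'a\<times>'b\<times>'c. ennreal (h ((norm (fst x))\<^sup>2 + (norm (fst (snd x)))\<^sup>2 + (norm (snd (snd x)))\<^sup>2)))
      = (\<lambda>x. ennreal (h ((norm x)\<^sup>2)))"
    by (auto simp: norm_Pair add.assoc)
  have "1 = (\<integral>\<^sup>+x. ennreal (h ((norm x)\<^sup>2)) \<partial>(lborel :: ('a\<times>'b\<times>'c) measure))"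
    using norm1 eqf by simp
  also have "\<dots> = (\<integral>\<^sup>+v. ennreal (indicator {0<..} v * (c * v powr (D/2 - 1))) * ennreal (h v) \<partial>lborel)"
    by (subst nn_integral_radial) (auto simp: c_def D_def add.assoc)
  also have "\<dots> = (\<integral>\<^sup>+v. ennreal c * ennreal (indicator {0<..} v * v powr (D/2 - 1) * h v) \<partial>lborel)"
  proof (rule nn_integral_cong)
    fix v :: real
    show "ennreal (indicator {0<..} v * (c * v powr (D/2 - 1))) * ennreal (h v) = ennreal c * ennreal (indicator {0<..} v * v powr (D/2 - 1) * h v)"
    proof (cases "v > 0")
      case True
      then have "h v \<ge> 0" by (intro hnn) simp
      then show ?thesis using True cpos by (simp add: ennreal_mult[symmetric] mult_ac)
    qed simp
  qed
  also have "\<dots> = ennreal c * J"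
    unfolding J_def by (rule nn_integral_cmult) measurable
  finally have 1: "ennreal c * J = 1" by simp
  have "J = ennreal (1/c) * (ennreal c * J)"
    using cpos by (simp add: ennreal_mult[symmetric] mult.assoc[symmetric])
  also have "\<dots> = ennreal (1/c)" by (simp add: 1)
  also have "\<dots> = ennreal (Gamma (D/2) / pi powr (D/2))" unfolding c_def by simp
  finally show ?thesis unfolding J_def .
qed

lemma v0int:
  fixes h :: "real \<Rightarrow> real" and t :: "'b::real_normed_vector" and r :: "'c::real_normed_vector"
  assumes hm[measurable]: "h \<in> borel_measurable borel"
    and hnn: "\<And>t. t \<ge> 0 \<Longrightarrow> h t \<ge> 0"
    and d: "d0 > 0" "d1 > 0" "d2 > 0"
    and J: "(\<integral>\<^sup>+u. ennreal (indicator {0<..} u * u powr ((d0+d1+d2)/2 - 1) * h u) \<partial>lborel) = ennreal (Gamma ((d0+d1+d2)/2) / pi powr ((d0+d1+d2)/2))"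
  shows "(\<integral>\<^sup>+v0. ennreal (indicator {(v0', t', r'). v0' > 0 \<and> (norm r')\<^sup>2 < 1} (v0,t,r) *
              (pi powr (d0 / 2) * v0 powr ((d0 + d1 + d2) / 2 - 1) / Gamma (d0 / 2)) *
              h (v0 * (1 + (1 - (norm r)\<^sup>2) * (norm t)\<^sup>2)) *
              (1 - (norm r)\<^sup>2) powr ((d0 + d1) / 2 - 1)) \<partial>lborel)
    = ennreal (indicator {(t', r'). (norm r')\<^sup>2 < 1} (t,r) *
              (Gamma ((d0+d1+d2) / 2) / (pi powr ((d1+d2) / 2) * Gamma (d0 / 2))) *
              (1 + (1 - (norm r)\<^sup>2) * (norm t)\<^sup>2) powr (- ((d0+d1+d2) / 2)) *
              (1 - (norm r)\<^sup>2) powr ((d0 + d1) / 2 - 1))"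
proof (cases "(norm r)\<^sup>2 < 1")
  case False
  then show ?thesis by simp
next
  case True
  define D where "D = d0 + d1 + d2"
  define k where "k = 1 + (1 - (norm r)\<^sup>2) * (norm t)\<^sup>2"
  define W where "W = (1 - (norm r)\<^sup>2) powr ((d0 + d1) / 2 - 1)"
  define A where "A = pi powr (d0/2) / Gamma (d0/2) / k powr (D/2 - 1) * W"
  have k1: "k \<ge> 1" unfolding k_def using True by simp
  have Wpos: "W > 0" unfolding W_def using True by simp
  have G0: "Gamma (d0/2) > 0" using d by (intro Gamma_real_pos) simp
  have Apos: "A \<ge> 0" unfolding A_def using Wpos G0 by simp
  have "(\<integral>\<^sup>+v0. ennreal (indicator {(v0', t', r'). v0' > 0 \<and> (norm r')\<^sup>2 < 1} (v0,t,r) *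
              (pi powr (d0 / 2) * v0 powr ((d0 + d1 + d2) / 2 - 1) / Gamma (d0 / 2)) *
              h (v0 * (1 + (1 - (norm r)\<^sup>2) * (norm t)\<^sup>2)) *
              (1 - (norm r)\<^sup>2) powr ((d0 + d1) / 2 - 1)) \<partial>lborel)
      = (\<integral>\<^sup>+v0. ennreal (indicator {0<..} v0 * (pi powr (d0 / 2) * v0 powr (D / 2 - 1) / Gamma (d0 / 2)) * h (v0 * k) * W) \<partial>lborel)"
    using True by (intro nn_integral_cong) (simp add: D_def k_def W_def indicator_def)
  also have "\<dots> = ennreal \<bar>1/k\<bar> * (\<integral>\<^sup>+u. ennreal (indicator {0<..} (0 + 1/k * u) * (pi powr (d0 / 2) * (0 + 1/k * u) powr (D / 2 - 1) / Gamma (d0 / 2)) * h ((0 + 1/k * u) * k) * W) \<partial>lborel)"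
    using k1 by (intro nn_integral_real_affine) auto
  also have "\<dots> = ennreal (1/k) * (\<integral>\<^sup>+u. ennreal A * ennreal (indicator {0<..} u * u powr (D/2 - 1) * h u) \<partial>lborel)"
  proof -
    have "ennreal (indicator {0<..} (0 + 1/k * u) * (pi powr (d0 / 2) * (0 + 1/k * u) powr (D / 2 - 1) / Gamma (d0 / 2)) * h ((0 + 1/k * u) * k) * W)
        = ennreal A * ennreal (indicator {0<..} u * u powr (D/2 - 1) * h u)" for u
    proof (cases "u > 0")
      case True
      have hu: "h u \<ge> 0" using True by (intro hnn) simp
      have e: "(u / k) powr ((D - 2) / 2) = u powr ((D - 2) / 2) / k powr ((D - 2) / 2)"
        using True k1 by (simp add: powr_divide)
      show ?thesis using True k1 hu Apos
        by (simp add: ennreal_mult[symmetric] A_def field_simps e)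
    next
      case False
      then have "\<not> 1/k * u > 0" using k1 by (simp add: zero_less_divide_iff)
      then show ?thesis using False by simp
    qed
    then show ?thesis using k1 by simp
  qed
  also have "\<dots> = ennreal (1/k) * (ennreal A * ennreal (Gamma (D/2) / pi powr (D/2)))"
    by (subst nn_integral_cmult) (auto simp: J[folded D_def])
  also have "\<dots> = ennreal (1/k * A * (Gamma (D/2) / pi powr (D/2)))"
  proof -
    have "Gamma (D/2) > 0" unfolding D_def using d by (intro Gamma_real_pos) simp
    then have g: "Gamma (D/2) / pi powr (D/2) \<ge> 0" by simp
    have k': "1/k \<ge> 0" using k1 by simp
    show ?thesis
      unfolding mult.assoc ennreal_mult[OF k' mult_nonneg_nonneg[OF Apos g]] ennreal_mult[OF Apos g] ..
  qed
  also have "1/k * A * (Gamma (D/2) / pi powr (D/2)) =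
      (Gamma (D / 2) / (pi powr ((d1+d2) / 2) * Gamma (d0 / 2))) * k powr (- (D / 2)) * W"
  proof -
    have kk: "1/k / k powr (D/2 - 1) = k powr (- (D/2))"
    proof -
      have "k powr (D/2) = k powr 1 * k powr (D/2 - 1)" using powr_add[of k 1 "D/2-1"] by simp
      moreover have "k powr 1 = k" using k1 by simp
      ultimately have "k * k powr (D/2 - 1) = k powr (D/2)" by simp
      then have "1/k / k powr (D/2 - 1) = inverse (k powr (D/2))"
        by (metis divide_divide_eq_left inverse_eq_divide)
      then show ?thesis by (simp add: powr_minus)
    qed
    have pp: "pi powr (D/2) = pi powr (d0/2) * pi powr ((d1+d2)/2)"
      unfolding D_def by (simp add: powr_add[symmetric] add_divide_distrib add.assoc)
    have ppos: "pi powr (d0/2) > 0" by simp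
    have "1/k * A * (Gamma (D/2) / pi powr (D/2)) =
       (1/k / k powr (D/2 - 1)) * (pi powr (d0/2) * inverse (pi powr (d0/2))) * (Gamma (D/2) * inverse (pi powr ((d1+d2)/2)) * inverse (Gamma (d0/2))) * W"
      unfolding A_def pp by (simp only: divide_inverse inverse_mult_distrib mult_ac)
    also have "\<dots> = k powr (- (D/2)) * (Gamma (D/2) * inverse (pi powr ((d1+d2)/2)) * inverse (Gamma (d0/2))) * W"
      unfolding kk using ppos by simp
    also have "\<dots> = (Gamma (D / 2) / (pi powr ((d1+d2) / 2) * Gamma (d0 / 2))) * k powr (- (D / 2)) * W"
      by (simp only: divide_inverse inverse_mult_distrib mult_ac)
    finally show ?thesis .
  qed
  finally show ?thesis using True by (simp add: D_def k_def W_def)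
qed

lemma distributed_transform:
  fixes X :: "'s \<Rightarrow> 'a::euclidean_space" and Y :: "'a \<Rightarrow> 'b::euclidean_space"
  assumes D: "distributed M lborel X fX" and Ym: "Y \<in> borel_measurable borel"
    and fm: "f \<in> borel_measurable borel"
    and eq: "\<And>A. A \<in> sets borel \<Longrightarrow> (\<integral>\<^sup>+x. fX x * indicator A (Y x) \<partial>lborel) = (\<integral>\<^sup>+y. f y * indicator A y \<partial>lborel)"
  shows "distributed M lborel (\<lambda>\<omega>. Y (X \<omega>)) f"
proof -
  have Xm: "X \<in> measurable M lborel" using D by (rule distributed_measurable)
  have fXm: "fX \<in> borel_measurable lborel" using D by (rule distributed_borel_measurable)
  have Ym': "Y \<in> measurable lborel lborel" using Ym by simp
  have YXm: "(\<lambda>\<omega>. Y (X \<omega>)) \<in> measurable M lborel" using measurable_compose[OF Xm Ym'] .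
  have "distr M lborel (\<lambda>\<omega>. Y (X \<omega>)) = distr (distr M lborel X) lborel Y"
    by (subst distr_distr[OF Ym' Xm]) (simp add: comp_def)
  also have "\<dots> = distr (density lborel fX) lborel Y" using D by (simp add: distributed_distr_eq_density)
  also have "\<dots> = density lborel f"
  proof (rule measure_eqI)
    show "sets (distr (density lborel fX) lborel Y) = sets (density lborel f)" by simp
    fix A assume "A \<in> sets (distr (density lborel fX) lborel Y)"
    then have A: "A \<in> sets borel" by simp
    have Ym'': "Y \<in> measurable (density lborel fX) lborel" using Ym by simp
    have "emeasure (distr (density lborel fX) lborel Y) A = emeasure (density lborel fX) (Y -` A \<inter> space (density lborel fX))"
      using A by (intro emeasure_distr Ym'') simp
    also have "\<dots> = (\<integral>\<^sup>+x. fX x * indicator (Y -` A) x \<partial>lborel)"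
      using A Ym fXm by (subst emeasure_density) (auto intro: measurable_sets_borel)
    also have "\<dots> = (\<integral>\<^sup>+x. fX x * indicator A (Y x) \<partial>lborel)"
      by (simp add: indicator_vimage[symmetric])
    also have "\<dots> = (\<integral>\<^sup>+y. f y * indicator A y \<partial>lborel)" using A by (rule eq)
    also have "\<dots> = emeasure (density lborel f) A"
      using A fm by (subst emeasure_density) auto
    finally show "emeasure (distr (density lborel fX) lborel Y) A = emeasure (density lborel f) A" .
  qed
  finally show ?thesis unfolding distributed_def using YXm fm by simp
qed

lemma marginal:
  fixes h :: "real \<Rightarrow> real" and g :: "'b::euclidean_space \<times> 'c::euclidean_space \<Rightarrow> ennreal"
  assumes hm[measurable]: "h \<in> borel_measurable borel" and gm[measurable]: "g \<in> borel_measurable borel"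
    and hnn: "\<And>t. t \<ge> 0 \<Longrightarrow> h t \<ge> 0"
    and norm1: "(\<integral>\<^sup>+x. ennreal (h ((norm (fst x))\<^sup>2 + (norm (fst (snd x)))\<^sup>2 + (norm (snd (snd x)))\<^sup>2)) \<partial>(lborel :: ('a::euclidean_space \<times> 'b \<times> 'c) measure)) = 1"
  defines "d0 \<equiv> real DIM('a)" and "d1 \<equiv> real DIM('b)" and "d2 \<equiv> real DIM('c)"
  shows "(\<integral>\<^sup>+x. ennreal (h ((norm (fst x))\<^sup>2 + (norm (fst (snd x)))\<^sup>2 + (norm (snd (snd x)))\<^sup>2)) *
            g (inverse (sqrt ((norm (fst x))\<^sup>2)) *\<^sub>R fst (snd x),
               inverse (sqrt ((norm (fst x))\<^sup>2 + (norm (snd (snd x)))\<^sup>2)) *\<^sub>R snd (snd x)) \<partial>(lborel :: ('a \<times> 'b \<times> 'c) measure))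
       = (\<integral>\<^sup>+q. ennreal (indicator {(t', r'). (norm r')\<^sup>2 < 1} q *
              (Gamma ((d0+d1+d2) / 2) / (pi powr ((d1+d2) / 2) * Gamma (d0 / 2))) *
              (1 + (1 - (norm (snd q))\<^sup>2) * (norm (fst q))\<^sup>2) powr (- ((d0+d1+d2) / 2)) *
              (1 - (norm (snd q))\<^sup>2) powr ((d0 + d1) / 2 - 1)) * g q \<partial>lborel)"
proof -
  define FA where "FA = (\<lambda>v0 (q::'b\<times>'c). ennreal (indicator {(v0', t', r'). v0' > 0 \<and> (norm r')\<^sup>2 < 1} (v0, fst q, snd q) *
              (pi powr (d0 / 2) * v0 powr ((d0 + d1 + d2) / 2 - 1) / Gamma (d0 / 2)) *
              h (v0 * (1 + (1 - (norm (snd q))\<^sup>2) * (norm (fst q))\<^sup>2)) *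
              (1 - (norm (snd q))\<^sup>2) powr ((d0 + d1) / 2 - 1)))"
  have FAm: "(\<lambda>y. FA (fst y) (snd y)) \<in> borel_measurable borel"
    unfolding FA_def by (rule meas3) measurable
  have gsm: "(\<lambda>y::real\<times>'b\<times>'c. g (snd y)) \<in> borel_measurable borel"
    using meas_comp[OF gm, of "snd :: real\<times>'b\<times>'c \<Rightarrow> _"] by (simp add: continuous_on_snd)
  have FAgm: "(\<lambda>y. FA (fst y) (snd y) * g (snd y)) \<in> borel_measurable borel"
    using FAm gsm by (rule borel_measurable_times_ennreal)
  have d: "d0 > 0" "d1 > 0" "d2 > 0" unfolding d0_def d1_def d2_def by auto
  have J: "(\<integral>\<^sup>+u. ennreal (indicator {0<..} u * u powr ((d0+d1+d2)/2 - 1) * h u) \<partial>lborel) = ennreal (Gamma ((d0+d1+d2)/2) / pi powr ((d0+d1+d2)/2))"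
    using Jlem[OF hm hnn norm1] unfolding d0_def d1_def d2_def .
  have "(\<integral>\<^sup>+x. ennreal (h ((norm (fst x))\<^sup>2 + (norm (fst (snd x)))\<^sup>2 + (norm (snd (snd x)))\<^sup>2)) *
            g (inverse (sqrt ((norm (fst x))\<^sup>2)) *\<^sub>R fst (snd x),
               inverse (sqrt ((norm (fst x))\<^sup>2 + (norm (snd (snd x)))\<^sup>2)) *\<^sub>R snd (snd x)) \<partial>(lborel :: ('a \<times> 'b \<times> 'c) measure))
      = (\<integral>\<^sup>+y. FA (fst y) (snd y) * g (snd y) \<partial>lborel)"
    using core[OF hm gsm hnn, where 'a='a] unfolding d0_def[symmetric] d1_def[symmetric] d2_def[symmetric] FA_def snd_conv prod.collapse .
  also have "\<dots> = (\<integral>\<^sup>+v0. \<integral>\<^sup>+q. FA v0 q * g q \<partial>lborel \<partial>lborel)"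
    using nn_integral_pair_iter[OF FAgm] by simp
  also have "\<dots> = (\<integral>\<^sup>+q. \<integral>\<^sup>+v0. FA v0 q * g q \<partial>lborel \<partial>lborel)"
    by (rule nn_integral_swap) (use FAgm in simp)
  also have "\<dots> = (\<integral>\<^sup>+q. (\<integral>\<^sup>+v0. FA v0 q \<partial>lborel) * g q \<partial>lborel)"
  proof (rule nn_integral_cong)
    fix q :: "'b \<times> 'c"
    have "(\<lambda>v0. FA v0 q) \<in> borel_measurable borel"
      using meas_comp[OF FAm, of "\<lambda>v. (v, q)"] by (simp add: continuous_intros)
    then show "(\<integral>\<^sup>+v0. FA v0 q * g q \<partial>lborel) = (\<integral>\<^sup>+v0. FA v0 q \<partial>lborel) * g q"
      by (intro nn_integral_multc) simp
  qed
  also have "\<dots> = (\<integral>\<^sup>+q. ennreal (indicator {(t', r'). (norm r')\<^sup>2 < 1} q *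
              (Gamma ((d0+d1+d2) / 2) / (pi powr ((d1+d2) / 2) * Gamma (d0 / 2))) *
              (1 + (1 - (norm (snd q))\<^sup>2) * (norm (fst q))\<^sup>2) powr (- ((d0+d1+d2) / 2)) *
              (1 - (norm (snd q))\<^sup>2) powr ((d0 + d1) / 2 - 1)) * g q \<partial>lborel)"
  proof (rule nn_integral_cong)
    fix q :: "'b \<times> 'c"
    obtain t r where q: "q = (t, r)" by (cases q)
    show "(\<integral>\<^sup>+v0. FA v0 q \<partial>lborel) * g q = ennreal (indicator {(t', r'). (norm r')\<^sup>2 < 1} q *
              (Gamma ((d0+d1+d2) / 2) / (pi powr ((d1+d2) / 2) * Gamma (d0 / 2))) *
              (1 + (1 - (norm (snd q))\<^sup>2) * (norm (fst q))\<^sup>2) powr (- ((d0+d1+d2) / 2)) *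
              (1 - (norm (snd q))\<^sup>2) powr ((d0 + d1) / 2 - 1)) * g q"
      unfolding q FA_def using v0int[OF hm hnn d J, of t r] by (simp only: fst_conv snd_conv)
  qed
  finally show ?thesis .
qed



lemma measP3:
  fixes f :: "'a::euclidean_space \<times> 'b::euclidean_space \<times> 'c::euclidean_space \<Rightarrow> 'd::euclidean_space \<times> 'e::euclidean_space \<times> 'f::euclidean_space"
  assumes "f \<in> (borel \<Otimes>\<^sub>M (borel \<Otimes>\<^sub>M borel)) \<rightarrow>\<^sub>M (borel \<Otimes>\<^sub>M (borel \<Otimes>\<^sub>M borel))"
  shows "f \<in> borel_measurable borel"
  using assms by (simp only: borel_prod)

lemma measP2:
  fixes f :: "'a::euclidean_space \<times> 'b::euclidean_space \<times> 'c::euclidean_space \<Rightarrow> 'd::euclidean_space \<times> 'e::euclidean_space"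
  assumes "f \<in> (borel \<Otimes>\<^sub>M (borel \<Otimes>\<^sub>M borel)) \<rightarrow>\<^sub>M (borel \<Otimes>\<^sub>M borel)"
  shows "f \<in> borel_measurable borel"
  using assms by (simp only: borel_prod)

theorem theorem8:
  fixes M :: "'a measure"
    and h :: "real \<Rightarrow> real"
    and X :: "'a \<Rightarrow> (real^'m^'n0) \<times> (real^'m^'n1) \<times> (real^'m^'n2)"
  defines "n0 \<equiv> real CARD('n0)"
    and "n1 \<equiv> real CARD('n1)"
    and "m \<equiv> real CARD('m)"
    and "N \<equiv> real (CARD('n0) + CARD('n1) + CARD('n2))"
    and "V \<equiv> \<lambda>\<omega>. (norm (fst (X \<omega>)))\<^sup>2"
    and "V0 \<equiv> \<lambda>\<omega>. (norm (fst (X \<omega>)))\<^sup>2 + (norm (snd (snd (X \<omega>))))\<^sup>2"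
  defines "T \<equiv> \<lambda>\<omega>. inverse (sqrt (V \<omega>)) *\<^sub>R fst (snd (X \<omega>))"
    and "R \<equiv> \<lambda>\<omega>. inverse (sqrt (V0 \<omega>)) *\<^sub>R snd (snd (X \<omega>))"
  assumes "prob_space M"
    and "CARD('m) \<le> CARD('n0)" and "CARD('m) \<le> CARD('n1)" and "CARD('m) \<le> CARD('n2)"
    and "h \<in> borel_measurable borel"
    and "\<And>t. t \<ge> 0 \<Longrightarrow> h t \<ge> 0"
    and "distributed M lborel X
           (\<lambda>x. ennreal (h ((norm (fst x))\<^sup>2 + (norm (fst (snd x)))\<^sup>2 + (norm (snd (snd x)))\<^sup>2)))"
  shows "distributed M lborel (\<lambda>\<omega>. (V0 \<omega>, T \<omega>, R \<omega>))
           (\<lambda>(v0, t, r). ennreal (indicator {(v0', t', r'). v0' > 0 \<and> (norm r')\<^sup>2 < 1} (v0, t, r) *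
              (pi powr (n0 * m / 2) * v0 powr (N * m / 2 - 1) / Gamma (n0 * m / 2)) *
              h (v0 * (1 + (1 - (norm r)\<^sup>2) * (norm t)\<^sup>2)) *
              (1 - (norm r)\<^sup>2) powr ((n0 + n1) * m / 2 - 1)))
         \<and> distributed M lborel (\<lambda>\<omega>. (T \<omega>, R \<omega>))
           (\<lambda>(t, r). ennreal (indicator {(t', r'). (norm r')\<^sup>2 < 1} (t, r) *
              (Gamma (N * m / 2) / (pi powr ((N - n0) * m / 2) * Gamma (n0 * m / 2))) *
              (1 + (1 - (norm r)\<^sup>2) * (norm t)\<^sup>2) powr (- (N * m / 2)) *
              (1 - (norm r)\<^sup>2) powr ((n0 + n1) * m / 2 - 1)))"
proof -
  have hm[measurable]: "h \<in> borel_measurable borel" by fact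
  have hnn: "\<And>t. t \<ge> 0 \<Longrightarrow> h t \<ge> 0" by fact
  note D = assms(15)
  define d0 where "d0 = real DIM(real^'m^'n0)"
  define d1 where "d1 = real DIM(real^'m^'n1)"
  define d2 where "d2 = real DIM(real^'m^'n2)"
  have e0: "n0 * m = d0" unfolding n0_def m_def d0_def by simp
  have e01: "(n0 + n1) * m = d0 + d1" unfolding n0_def n1_def m_def d0_def d1_def by (simp add: algebra_simps)
  have eN: "N * m = d0 + d1 + d2" unfolding N_def m_def d0_def d1_def d2_def by (simp add: algebra_simps)
  have eNn: "(N - n0) * m = d1 + d2" unfolding N_def n0_def m_def d1_def d2_def by (simp add: algebra_simps)
  have norm1: "(\<integral>\<^sup>+x. ennreal (h ((norm (fst x))\<^sup>2 + (norm (fst (snd x)))\<^sup>2 + (norm (snd (snd x)))\<^sup>2)) \<partial>(lborel :: ((real^'m^'n0) \<times> (real^'m^'n1) \<times> (real^'m^'n2)) measure)) = 1"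
  proof -
    interpret prob_space M by fact
    have Xm: "X \<in> measurable M lborel" using D by (rule distributed_measurable)
    have "emeasure (distr M lborel X) UNIV = emeasure M (X -` UNIV \<inter> space M)"
      using Xm by (intro emeasure_distr) auto
    also have "\<dots> = 1" by (simp add: emeasure_space_1)
    finally have "emeasure (density (lborel :: ((real^'m^'n0) \<times> (real^'m^'n1) \<times> (real^'m^'n2)) measure) (\<lambda>x. ennreal (h ((norm (fst x))\<^sup>2 + (norm (fst (snd x)))\<^sup>2 + (norm (snd (snd x)))\<^sup>2)))) UNIV = 1"
      using D by (simp add: distributed_distr_eq_density)
    then show ?thesis using distributed_borel_measurable[OF D] by (subst (asm) emeasure_density) auto
  qed
  define Y where "Y = (\<lambda>x::(real^'m^'n0) \<times> (real^'m^'n1) \<times> (real^'m^'n2). ((norm (fst x))\<^sup>2 + (norm (snd (snd x)))\<^sup>2,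
               inverse (sqrt ((norm (fst x))\<^sup>2)) *\<^sub>R fst (snd x),
               inverse (sqrt ((norm (fst x))\<^sup>2 + (norm (snd (snd x)))\<^sup>2)) *\<^sub>R snd (snd x)))"
  have Ym: "Y \<in> borel_measurable borel"
    unfolding Y_def by (rule measP3) measurable
  have YX: "(\<lambda>\<omega>. (V0 \<omega>, T \<omega>, R \<omega>)) = (\<lambda>\<omega>. Y (X \<omega>))"
    by (simp add: Y_def V0_def T_def R_def V_def)
  define Y2 where "Y2 = (\<lambda>x::(real^'m^'n0) \<times> (real^'m^'n1) \<times> (real^'m^'n2). (
               inverse (sqrt ((norm (fst x))\<^sup>2)) *\<^sub>R fst (snd x),
               inverse (sqrt ((norm (fst x))\<^sup>2 + (norm (snd (snd x)))\<^sup>2)) *\<^sub>R snd (snd x)))"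
  have Y2m: "Y2 \<in> borel_measurable borel"
    unfolding Y2_def by (rule measP2) measurable
  have Y2X: "(\<lambda>\<omega>. (T \<omega>, R \<omega>)) = (\<lambda>\<omega>. Y2 (X \<omega>))"
    by (simp add: Y2_def V0_def T_def R_def V_def)
  have fa: "(\<lambda>(v0, t, r). ennreal (indicator {(v0', t', r'). v0' > 0 \<and> (norm r')\<^sup>2 < 1} (v0, t, r) *
              (pi powr (n0 * m / 2) * v0 powr (N * m / 2 - 1) / Gamma (n0 * m / 2)) *
              h (v0 * (1 + (1 - (norm r)\<^sup>2) * (norm t)\<^sup>2)) *
              (1 - (norm r)\<^sup>2) powr ((n0 + n1) * m / 2 - 1)))
     = (\<lambda>y. ennreal (indicator {(v0', t', r'). v0' > 0 \<and> (norm r')\<^sup>2 < 1} y *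
              (pi powr (d0 / 2) * fst y powr ((d0 + d1 + d2) / 2 - 1) / Gamma (d0 / 2)) *
              h (fst y * (1 + (1 - (norm (snd (snd y)))\<^sup>2) * (norm (fst (snd y)))\<^sup>2)) *
              (1 - (norm (snd (snd y)))\<^sup>2) powr ((d0 + d1) / 2 - 1)))"
    unfolding e0 e01 eN by (simp add: split_beta')
  have fb: "(\<lambda>(t, r). ennreal (indicator {(t', r'). (norm r')\<^sup>2 < 1} (t, r) *
              (Gamma (N * m / 2) / (pi powr ((N - n0) * m / 2) * Gamma (n0 * m / 2))) *
              (1 + (1 - (norm r)\<^sup>2) * (norm t)\<^sup>2) powr (- (N * m / 2)) *
              (1 - (norm r)\<^sup>2) powr ((n0 + n1) * m / 2 - 1)))
     = (\<lambda>q. ennreal (indicator {(t', r'). (norm r')\<^sup>2 < 1} q *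
              (Gamma ((d0+d1+d2) / 2) / (pi powr ((d1+d2) / 2) * Gamma (d0 / 2))) *
              (1 + (1 - (norm (snd q))\<^sup>2) * (norm (fst q))\<^sup>2) powr (- ((d0+d1+d2) / 2)) *
              (1 - (norm (snd q))\<^sup>2) powr ((d0 + d1) / 2 - 1)))"
    unfolding e0 e01 eN eNn by (simp add: split_beta')
  have A: "distributed M lborel (\<lambda>\<omega>. (V0 \<omega>, T \<omega>, R \<omega>))
           (\<lambda>(v0, t, r). ennreal (indicator {(v0', t', r'). v0' > 0 \<and> (norm r')\<^sup>2 < 1} (v0, t, r) *
              (pi powr (n0 * m / 2) * v0 powr (N * m / 2 - 1) / Gamma (n0 * m / 2)) *
              h (v0 * (1 + (1 - (norm r)\<^sup>2) * (norm t)\<^sup>2)) *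
              (1 - (norm r)\<^sup>2) powr ((n0 + n1) * m / 2 - 1)))"
    unfolding YX fa
  proof (rule distributed_transform[OF D Ym])
    show "(\<lambda>y::real \<times> (real^'m^'n1) \<times> (real^'m^'n2). ennreal (indicator {(v0', t', r'). v0' > 0 \<and> (norm r')\<^sup>2 < 1} y *
              (pi powr (d0 / 2) * fst y powr ((d0 + d1 + d2) / 2 - 1) / Gamma (d0 / 2)) *
              h (fst y * (1 + (1 - (norm (snd (snd y)))\<^sup>2) * (norm (fst (snd y)))\<^sup>2)) *
              (1 - (norm (snd (snd y)))\<^sup>2) powr ((d0 + d1) / 2 - 1))) \<in> borel_measurable borel"
      by (rule meas3) measurable
    fix A :: "(real \<times> (real^'m^'n1) \<times> (real^'m^'n2)) set" assume A: "A \<in> sets borel"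
    then have [measurable]: "indicator A \<in> borel_measurable (borel :: (real \<times> (real^'m^'n1) \<times> (real^'m^'n2)) measure)"
      by simp
    from core[OF hm this hnn, where 'a="real^'m^'n0"]
    show "(\<integral>\<^sup>+x. ennreal (h ((norm (fst x))\<^sup>2 + (norm (fst (snd x)))\<^sup>2 + (norm (snd (snd x)))\<^sup>2)) * indicator A (Y x) \<partial>lborel) =
      (\<integral>\<^sup>+y. ennreal (indicator {(v0', t', r'). v0' > 0 \<and> (norm r')\<^sup>2 < 1} y *
              (pi powr (d0 / 2) * fst y powr ((d0 + d1 + d2) / 2 - 1) / Gamma (d0 / 2)) *
              h (fst y * (1 + (1 - (norm (snd (snd y)))\<^sup>2) * (norm (fst (snd y)))\<^sup>2)) *
              (1 - (norm (snd (snd y)))\<^sup>2) powr ((d0 + d1) / 2 - 1)) * indicator A y \<partial>lborel)"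
      unfolding Y_def d0_def d1_def d2_def .
  qed
  have B: "distributed M lborel (\<lambda>\<omega>. (T \<omega>, R \<omega>))
           (\<lambda>(t, r). ennreal (indicator {(t', r'). (norm r')\<^sup>2 < 1} (t, r) *
              (Gamma (N * m / 2) / (pi powr ((N - n0) * m / 2) * Gamma (n0 * m / 2))) *
              (1 + (1 - (norm r)\<^sup>2) * (norm t)\<^sup>2) powr (- (N * m / 2)) *
              (1 - (norm r)\<^sup>2) powr ((n0 + n1) * m / 2 - 1)))"
    unfolding Y2X fb
  proof (rule distributed_transform[OF D Y2m])
    show "(\<lambda>q::(real^'m^'n1) \<times> (real^'m^'n2). ennreal (indicator {(t', r'). (norm r')\<^sup>2 < 1} q *
              (Gamma ((d0+d1+d2) / 2) / (pi powr ((d1+d2) / 2) * Gamma (d0 / 2))) *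
              (1 + (1 - (norm (snd q))\<^sup>2) * (norm (fst q))\<^sup>2) powr (- ((d0+d1+d2) / 2)) *
              (1 - (norm (snd q))\<^sup>2) powr ((d0 + d1) / 2 - 1))) \<in> borel_measurable borel"
      by (rule meas2) measurable
    fix A :: "((real^'m^'n1) \<times> (real^'m^'n2)) set" assume A: "A \<in> sets borel"
    then have [measurable]: "indicator A \<in> borel_measurable (borel :: ((real^'m^'n1) \<times> (real^'m^'n2)) measure)"
      by simp
    from marginal[OF hm this hnn norm1]
    show "(\<integral>\<^sup>+x. ennreal (h ((norm (fst x))\<^sup>2 + (norm (fst (snd x)))\<^sup>2 + (norm (snd (snd x)))\<^sup>2)) * indicator A (Y2 x) \<partial>lborel) =
      (\<integral>\<^sup>+q. ennreal (indicator {(t', r'). (norm r')\<^sup>2 < 1} q *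
              (Gamma ((d0+d1+d2) / 2) / (pi powr ((d1+d2) / 2) * Gamma (d0 / 2))) *
              (1 + (1 - (norm (snd q))\<^sup>2) * (norm (fst q))\<^sup>2) powr (- ((d0+d1+d2) / 2)) *
              (1 - (norm (snd q))\<^sup>2) powr ((d0 + d1) / 2 - 1)) * indicator A q \<partial>lborel)"
      unfolding Y2_def d0_def d1_def d2_def .
  qed
  from A B show ?thesis by blast
qed

end
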